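(* Let $\Sigma$ be a finite alphabet. A regular language $L \subseteq \Sigma^*$ belongs to $\mathsf{F}(\mathcal{O}(1))$ if and only if $L$ is a finite Boolean combination of suffix testable languages and regular length languages.
   Context: A streaming algorithm over $\Sigma$ is a deterministic (possibly infinite-state) automaton with an injective encoding $\mathrm{enc}$ of its states into bit strings. Fix a symbol $a\in\Sigma$; for $w=a_1\cdots a_m$ and $n\ge0$, $\mathrm{last}_n(w)=a_{m-n+1}\cdots a_m$ if $n\le m$ and $a^{n-m}a_1\cdots a_m$ otherwise. A fixed-size sliding window algorithm for $L$ is a sequence $(\mathcal{A}_n)_{n\ge0}$ where $\mathcal{A}_n$ is a streaming algorithm accepting $\{w\in\Sigma^* : \mathrm{last}_n(w)\in L\}$; its space complexity at $n$ is the maximal encoding length of a state of $\mathcal{A}_n$. $\mathsf{F}(\mathcal{O}(1))$ is the class of languages having a fixed-size sliding window algorithm whose space complexity is bounded by a constant. $L$ is $k$-suffix testable if for all $x,y\in\Sigma^*$ and $z\in\Sigma^k$: $xz\in L\iff yz\in L$; suffix testable if $k$-suffix testable for some $k\ge0$. $L$ is a length language if for each $n$ either $\Sigma^n\subseteq L$ or $L\cap\Sigma^n=\emptyset$. *)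

theory Defs
  imports Main
begin

definition regular_lang :: "'a list set \<Rightarrow> bool" where
  "regular_lang L \<longleftrightarrow>
     (\<exists>(Q :: nat set) q0 (\<delta> :: nat \<Rightarrow> 'a \<Rightarrow> nat) F.
        finite Q \<and> q0 \<in> Q \<and> (\<forall>q\<in>Q. \<forall>x. \<delta> q x \<in> Q) \<and> F \<subseteq> Q \<and>
        L = {w. foldl \<delta> q0 w \<in> F})"

(* Since the state set injects into bit strings it is countable,
   so states are coded as natural numbers. *)
definition streaming_alg ::
  "nat set \<Rightarrow> nat \<Rightarrow> (nat \<Rightarrow> 'a \<Rightarrow> nat) \<Rightarrow> nat set \<Rightarrow> (nat \<Rightarrow> bool list) \<Rightarrow> bool" where
  "streaming_alg Q q0 \<delta> F enc \<longleftrightarrow>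
     q0 \<in> Q \<and> (\<forall>q\<in>Q. \<forall>x. \<delta> q x \<in> Q) \<and> F \<subseteq> Q \<and> inj_on enc Q"

definition sa_lang :: "nat \<Rightarrow> (nat \<Rightarrow> 'a \<Rightarrow> nat) \<Rightarrow> nat set \<Rightarrow> 'a list set" where
  "sa_lang q0 \<delta> F = {w. foldl \<delta> q0 w \<in> F}"

definition last_win :: "'a \<Rightarrow> nat \<Rightarrow> 'a list \<Rightarrow> 'a list" where
  "last_win a n w =
     (if n \<le> length w then drop (length w - n) w
      else replicate (n - length w) a @ w)"

(* L \<in> F(O(1)): there is a fixed-size sliding window algorithm (A_n)_n
   (A_n accepts {w. last_n(w) \<in> L}) whose space complexity (maximal encoding
   length of a state of A_n) is bounded by a constant c for all n. *)
definition F_O1 :: "'a \<Rightarrow> 'a list set \<Rightarrow> bool" where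
  "F_O1 a L \<longleftrightarrow>
     (\<exists>(Q :: nat \<Rightarrow> nat set) q0 (\<delta> :: nat \<Rightarrow> nat \<Rightarrow> 'a \<Rightarrow> nat) F enc (c :: nat).
        (\<forall>n. streaming_alg (Q n) (q0 n) (\<delta> n) (F n) (enc n) \<and>
             sa_lang (q0 n) (\<delta> n) (F n) = {w. last_win a n w \<in> L}) \<and>
        (\<forall>n. \<forall>q\<in>Q n. length (enc n q) \<le> c))"

definition k_suffix_testable :: "nat \<Rightarrow> 'a list set \<Rightarrow> bool" where
  "k_suffix_testable k L \<longleftrightarrow>
     (\<forall>x y z. length z = k \<longrightarrow> (x @ z \<in> L \<longleftrightarrow> y @ z \<in> L))"

definition suffix_testable :: "'a list set \<Rightarrow> bool" where
  "suffix_testable L \<longleftrightarrow> (\<exists>k. k_suffix_testable k L)"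

definition length_lang :: "'a list set \<Rightarrow> bool" where
  "length_lang L \<longleftrightarrow>
     (\<forall>n. {w. length w = n} \<subseteq> L \<or> L \<inter> {w. length w = n} = {})"

inductive_set bool_comb :: "'a list set set \<Rightarrow> 'a list set set" for B where
  base: "L \<in> B \<Longrightarrow> L \<in> bool_comb B"
| compl: "L \<in> bool_comb B \<Longrightarrow> - L \<in> bool_comb B"
| union: "L1 \<in> bool_comb B \<Longrightarrow> L2 \<in> bool_comb B \<Longrightarrow> L1 \<union> L2 \<in> bool_comb B"
| inter: "L1 \<in> bool_comb B \<Longrightarrow> L2 \<in> bool_comb B \<Longrightarrow> L1 \<inter> L2 \<in> bool_comb B"

end

theory Submission
  imports Defs "HOL-Library.Countable"
begin

lemma lw_alt: "last_win a m w = drop (length w) (replicate m a @ w)"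
  unfolding last_win_def by auto

lemma lw_len[simp]: "length (last_win a m w) = m"
  unfolding last_win_def by auto

lemma lw_id: "length u = m \<Longrightarrow> last_win a m u = u"
  unfolding last_win_def by auto

lemma lw_append_long: "m \<le> length v \<Longrightarrow> last_win a m (u @ v) = last_win a m v"
  unfolding last_win_def by auto

lemma lw_drop: "k \<le> length u \<Longrightarrow> last_win a k u = drop (length u - k) u"
  unfolding last_win_def by auto

lemma lw_mono: "m \<le> m' \<Longrightarrow> last_win a m (last_win a m' w) = last_win a m w"
  unfolding last_win_def by (auto simp: drop_append)

lemma lw_snoc: "last_win a m (w @ [x]) = (if m = 0 then [] else tl (last_win a m w) @ [x])"
  unfolding last_win_def by (auto simp: drop_append Suc_diff_le tl_drop drop_Suc)

lemma lw_step: "last_win a m (last_win a m w @ [x]) = last_win a m (w @ [x])"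
  by (simp add: lw_snoc lw_id)

definition PK :: "'a \<Rightarrow> 'a list set \<Rightarrow> nat \<Rightarrow> bool" where
  "PK a L K \<longleftrightarrow> (\<forall>n w w'. last_win a (min n K) w = last_win a (min n K) w' \<longrightarrow>
      (last_win a n w \<in> L \<longleftrightarrow> last_win a n w' \<in> L))"

lemma PK_D: "PK a L K \<Longrightarrow> last_win a (min n K) w = last_win a (min n K) w' \<Longrightarrow>
      (last_win a n w \<in> L \<longleftrightarrow> last_win a n w' \<in> L)"
  unfolding PK_def by blast

lemma PK_mono: assumes "PK a L K" "K \<le> K'" shows "PK a L K'"
  unfolding PK_def
proof (intro allI impI)
  fix n w w'
  assume e: "last_win a (min n K') w = last_win a (min n K') w'"
  have le: "min n K \<le> min n K'" using assms(2) by simp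
  have "last_win a (min n K) w = last_win a (min n K) w'"
    using arg_cong[OF e, of "last_win a (min n K)"] lw_mono[OF le, where a=a] by simp
  then show "last_win a n w \<in> L \<longleftrightarrow> last_win a n w' \<in> L" by (rule PK_D[OF assms(1)])
qed

lemma PK_compl: assumes "PK a L K" shows "PK a (- L) K"
  unfolding PK_def
proof (intro allI impI)
  fix n w w' assume e: "last_win a (min n K) w = last_win a (min n K) w'"
  show "last_win a n w \<in> - L \<longleftrightarrow> last_win a n w' \<in> - L"
    using PK_D[OF assms e] by (simp only: Compl_iff)
qed

lemma PK_union: assumes 1: "PK a L1 K1" and 2: "PK a L2 K2"
  shows "PK a (L1 \<union> L2) (max K1 K2)"
proof -
  have a: "PK a L1 (max K1 K2)" using 1 PK_mono by (metis max.cobounded1)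
  have b: "PK a L2 (max K1 K2)" using 2 PK_mono by (metis max.cobounded2)
  show ?thesis unfolding PK_def
  proof (intro allI impI)
    fix n w w' assume e: "last_win a (min n (max K1 K2)) w = last_win a (min n (max K1 K2)) w'"
    show "last_win a n w \<in> L1 \<union> L2 \<longleftrightarrow> last_win a n w' \<in> L1 \<union> L2"
      using PK_D[OF a e] PK_D[OF b e] by simp
  qed
qed

lemma PK_inter: assumes 1: "PK a L1 K1" and 2: "PK a L2 K2"
  shows "PK a (L1 \<inter> L2) (max K1 K2)"
proof -
  have a: "PK a L1 (max K1 K2)" using 1 PK_mono by (metis max.cobounded1)
  have b: "PK a L2 (max K1 K2)" using 2 PK_mono by (metis max.cobounded2)
  show ?thesis unfolding PK_def
  proof (intro allI impI)
    fix n w w' assume e: "last_win a (min n (max K1 K2)) w = last_win a (min n (max K1 K2)) w'"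
    show "last_win a n w \<in> L1 \<inter> L2 \<longleftrightarrow> last_win a n w' \<in> L1 \<inter> L2"
      using PK_D[OF a e] PK_D[OF b e] by simp
  qed
qed

lemma PK_suffix: assumes "k_suffix_testable k L" shows "PK a L k"
  unfolding PK_def
proof (intro allI impI)
  fix n w w'
  assume eq: "last_win a (min n k) w = last_win a (min n k) w'"
  show "last_win a n w \<in> L \<longleftrightarrow> last_win a n w' \<in> L"
  proof (cases "n \<le> k")
    case True
    then have "min n k = n" by simp
    then show ?thesis using eq by simp
  next
    case False
    let ?u = "last_win a n w" and ?v = "last_win a n w'"
    have mk: "min n k = k" using False by simp
    have k1: "last_win a k ?u = last_win a k w" using lw_mono[of k n a w] False by simp
    have k2: "last_win a k ?v = last_win a k w'" using lw_mono[of k n a w'] False by simp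
    have d1: "last_win a k ?u = drop (n - k) ?u" using lw_drop[of k ?u a] False by simp
    have d2: "last_win a k ?v = drop (n - k) ?v" using lw_drop[of k ?v a] False by simp
    have s: "drop (n - k) ?u = drop (n - k) ?v"
      using eq mk k1 k2 d1 d2 by simp
    have len: "length (drop (n-k) ?u) = k" using False by simp
    have "take (n-k) ?u @ drop (n-k) ?u \<in> L \<longleftrightarrow> take (n-k) ?v @ drop (n-k) ?u \<in> L"
      using assms len unfolding k_suffix_testable_def by blast
    then show ?thesis using s by (metis append_take_drop_id)
  qed
qed

lemma PK_length: assumes "length_lang L" shows "PK a L 0"
  unfolding PK_def
proof (intro allI impI)
  fix n w w'
  have "last_win a n w \<in> {x. length x = n}" "last_win a n w' \<in> {x. length x = n}" by simp_all
  moreover have "{x. length x = n} \<subseteq> L \<or> L \<inter> {x. length x = n} = {}"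
    using assms unfolding length_lang_def by simp
  ultimately show "last_win a n w \<in> L \<longleftrightarrow> last_win a n w' \<in> L"
    by blast
qed

lemma PK_comb: "L \<in> bool_comb ({K. suffix_testable K} \<union> {K. regular_lang K \<and> length_lang K})
  \<Longrightarrow> \<exists>K. PK a L K"
proof (induction rule: bool_comb.induct)
  case (base L)
  show ?case
  proof (cases "suffix_testable L")
    case True
    then obtain k where "k_suffix_testable k L" unfolding suffix_testable_def by blast
    then show ?thesis using PK_suffix[where a=a] by blast
  next
    case False
    then have "length_lang L" using base by simp
    then show ?thesis using PK_length[where a=a] by blast
  qed
next
  case (compl L)
  then obtain K where "PK a L K" by blast
  from PK_compl[OF this] show ?case by blast
next
  case (union L1 L2)
  then obtain K1 K2 where "PK a L1 K1" "PK a L2 K2" by blast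
  from PK_union[OF this] show ?case by blast
next
  case (inter L1 L2)
  then obtain K1 K2 where "PK a L1 K1" "PK a L2 K2" by blast
  from PK_inter[OF this] show ?case by blast
qed

lemma PK_F: fixes a :: "'a::finite" assumes "PK a L K" shows "F_O1 a L"
proof -
  define S where "S = {u :: 'a list. length u \<le> K}"
  have finS: "finite S" unfolding S_def using finite_lists_length_le[of "UNIV::'a set" K] by simp
  define Q where "Q = (\<lambda>n::nat. to_nat ` S)"
  define q0 where "q0 = (\<lambda>n. to_nat (last_win a (min n K) []))"
  define \<delta> where "\<delta> = (\<lambda>n q x. to_nat (last_win a (min n K) (from_nat q @ [x])))"
  define F where "F = (\<lambda>n. {q \<in> Q n. last_win a n (from_nat q) \<in> L})"
  define enc where "enc = (\<lambda>(n::nat) (q::nat). replicate q True)"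
  define c where "c = Max (to_nat ` S)"
  have fold: "foldl (\<delta> n) (q0 n) w = to_nat (last_win a (min n K) w)" for n w
  proof (induction w rule: rev_induct)
    case Nil then show ?case by (simp add: q0_def)
  next
    case (snoc x xs) then show ?case by (simp add: \<delta>_def lw_step)
  qed
  have inS: "last_win a (min n K) w \<in> S" for n w unfolding S_def by simp
  have sa: "streaming_alg (Q n) (q0 n) (\<delta> n) (F n) (enc n)" for n
    unfolding streaming_alg_def
  proof (intro conjI ballI allI)
    show "q0 n \<in> Q n" unfolding q0_def Q_def using inS by blast
    show "\<delta> n q x \<in> Q n" for q x unfolding \<delta>_def Q_def using inS by blast
    show "F n \<subseteq> Q n" unfolding F_def by blast
    show "inj_on (enc n) (Q n)" unfolding enc_def by (rule inj_onI) simp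
  qed
  have lang: "sa_lang (q0 n) (\<delta> n) (F n) = {w. last_win a n w \<in> L}" for n
  proof -
    have "foldl (\<delta> n) (q0 n) w \<in> F n \<longleftrightarrow> last_win a n w \<in> L" for w
    proof -
      have e: "last_win a (min n K) (last_win a (min n K) w) = last_win a (min n K) w"
        by (simp add: lw_id)
      have q: "to_nat (last_win a (min n K) w) \<in> Q n" unfolding Q_def using inS by blast
      have "foldl (\<delta> n) (q0 n) w \<in> F n \<longleftrightarrow> last_win a n (last_win a (min n K) w) \<in> L"
        unfolding fold F_def using q by simp
      also have "\<dots> \<longleftrightarrow> last_win a n w \<in> L" using PK_D[OF assms e] .
      finally show ?thesis .
    qed
    thus ?thesis unfolding sa_lang_def by blast
  qed
  have bd: "\<forall>n. \<forall>q\<in>Q n. length (enc n q) \<le> c"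
    unfolding Q_def enc_def c_def using finS by simp
  show ?thesis unfolding F_O1_def using sa lang bd by blast
qed

lemma chain_stab:
  fixes E :: "nat \<Rightarrow> 'b set"
  assumes fin: "finite S" and sub: "\<And>t. E t \<subseteq> S" and mono: "\<And>t. E t \<subseteq> E (Suc t)"
    and stab: "\<And>t. E t = E (Suc t) \<Longrightarrow> E (Suc t) = E (Suc (Suc t))"
  shows "\<exists>t \<le> card S. \<forall>j \<ge> t. E j = E t"
proof -
  have ex: "\<exists>t \<le> card S. E t = E (Suc t)"
  proof (rule ccontr)
    assume nex: "\<not> (\<exists>t \<le> card S. E t = E (Suc t))"
    have ne: "E t \<subset> E (Suc t)" if "t \<le> card S" for t
    proof -
      have "E t \<noteq> E (Suc t)" using nex that by blast
      then show ?thesis using mono[of t] by (simp add: psubset_eq)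
    qed
    have finE: "finite (E t)" for t using finite_subset[OF sub fin] .
    have "t \<le> Suc (card S) \<Longrightarrow> t \<le> card (E t)" for t
    proof (induction t)
      case 0 then show ?case by simp
    next
      case (Suc t)
      then have "t \<le> card S" by simp
      then have "card (E t) < card (E (Suc t))" by (rule psubset_card_mono[OF finE ne])
      then show ?case using Suc by simp
    qed
    then have "Suc (card S) \<le> card (E (Suc (card S)))" by simp
    moreover have "card (E (Suc (card S))) \<le> card S" using card_mono[OF fin sub] .
    ultimately show False by simp
  qed
  then obtain t where t: "t \<le> card S" "E t = E (Suc t)" by blast
  have "E (t + j) = E t \<and> E (Suc (t + j)) = E t" for j
  proof (induction j)
    case 0 then show ?case using t by simp
  next
    case (Suc j)
    then have "E (t + j) = E (Suc (t + j))" by simp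
    then have "E (Suc (t + j)) = E (Suc (Suc (t + j)))" by (rule stab)
    then show ?case using Suc by simp
  qed
  then have "\<forall>j \<ge> t. E j = E t"
  proof (intro allI impI)
    fix j assume "t \<le> j"
    then obtain d where "j = t + d" using le_iff_add by blast
    then show "E j = E t" using \<open>\<And>j. E (t + j) = E t \<and> E (Suc (t + j)) = E t\<close> by simp
  qed
  then show ?thesis using t by blast
qed

lemma foldl_in: "q \<in> Q \<Longrightarrow> \<forall>q\<in>Q. \<forall>x. \<delta> q x \<in> Q \<Longrightarrow> foldl \<delta> q w \<in> Q"
  by (induction w arbitrary: q) auto

lemma FO1_suf:
  assumes "F_O1 a L"
  shows "\<exists>k. \<forall>u v. length u = length v \<longrightarrow> k \<le> length u \<longrightarrow>
     drop (length u - k) u = drop (length v - k) v \<longrightarrow> (u \<in> L \<longleftrightarrow> v \<in> L)"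
proof -
  obtain Q q0 \<delta> F enc c where
    sa: "\<And>n. streaming_alg (Q n) (q0 n) (\<delta> n) (F n) (enc n)" and
    lang: "\<And>n. sa_lang (q0 n) (\<delta> n) (F n) = {w. last_win a n w \<in> L}" and
    bd: "\<And>n. \<forall>q\<in>Q n. length (enc n q) \<le> (c::nat)"
    using assms unfolding F_O1_def by blast
  define B where "B = {bs :: bool list. length bs \<le> c}"
  have finB: "finite B" unfolding B_def using finite_lists_length_le[of "UNIV::bool set" c] by simp
  define N where "N = card B"
  have cardQ: "finite (Q n) \<and> card (Q n) \<le> N" for n
  proof -
    have inj: "inj_on (enc n) (Q n)" using sa[of n] unfolding streaming_alg_def by blast
    have im: "enc n ` Q n \<subseteq> B" using bd[of n] unfolding B_def by blast
    show ?thesis using inj_on_finite[OF inj im finB] card_inj_on_le[OF inj im finB] N_def by simp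
  qed
  define k where "k = N * N"
  show ?thesis
  proof (rule exI[of _ k], intro allI impI)
    fix u v :: "'a list"
    assume len: "length u = length v" and kl: "k \<le> length u"
      and dr: "drop (length u - k) u = drop (length v - k) v"
    define n where "n = length u"
    have q0Q: "q0 n \<in> Q n" and clQ: "\<forall>q\<in>Q n. \<forall>x. \<delta> n q x \<in> Q n" and FQ: "F n \<subseteq> Q n"
      using sa[of n] unfolding streaming_alg_def by blast+
    have acc: "foldl (\<delta> n) (q0 n) w \<in> F n \<longleftrightarrow> last_win a n w \<in> L" for w
      using lang[of n] unfolding sa_lang_def by blast
    define R where "R = range (foldl (\<delta> n) (q0 n))"
    have RQ: "R \<subseteq> Q n" unfolding R_def using foldl_in[OF q0Q clQ] by blast
    have finR: "finite R" using RQ cardQ finite_subset by blast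
    have cardR: "card R \<le> N" using card_mono[OF _ RQ] cardQ by (meson order_trans)
    have Rcl: "p \<in> R \<Longrightarrow> \<delta> n p x \<in> R" for p x
    proof -
      assume "p \<in> R"
      then obtain \<tau> where "p = foldl (\<delta> n) (q0 n) \<tau>" unfolding R_def by blast
      then have "\<delta> n p x = foldl (\<delta> n) (q0 n) (\<tau> @ [x])" by simp
      then show ?thesis unfolding R_def by blast
    qed
    define E where "E = (\<lambda>t. {(p,q) \<in> R \<times> R. \<forall>z z'. length z = t \<longrightarrow>
        (foldl (\<delta> n) p (z @ z') \<in> F n \<longleftrightarrow> foldl (\<delta> n) q (z @ z') \<in> F n)})"
    have Esub: "E t \<subseteq> R \<times> R" for t unfolding E_def by blast
    have Emono: "E t \<subseteq> E (Suc t)" for t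
    proof
      fix pq assume "pq \<in> E t"
      then obtain p q where pq: "pq = (p,q)" "p \<in> R" "q \<in> R"
        and h: "\<And>z z'. length z = t \<Longrightarrow>
          (foldl (\<delta> n) p (z @ z') \<in> F n \<longleftrightarrow> foldl (\<delta> n) q (z @ z') \<in> F n)"
        unfolding E_def by blast
      have "foldl (\<delta> n) p (z @ z') \<in> F n \<longleftrightarrow> foldl (\<delta> n) q (z @ z') \<in> F n"
        if "length z = Suc t" for z z'
      proof -
        have "z @ z' = take t z @ (drop t z @ z')" by simp
        moreover have "length (take t z) = t" using that by simp
        ultimately show ?thesis using h by metis
      qed
      then show "pq \<in> E (Suc t)" unfolding E_def using pq by blast
    qed
    have Estep: "(p,q) \<in> E (Suc t) \<longleftrightarrow> p \<in> R \<and> q \<in> R \<and> (\<forall>x. (\<delta> n p x, \<delta> n q x) \<in> E t)"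
      for p q t
    proof
      assume "(p,q) \<in> E (Suc t)"
      then have pR: "p \<in> R" "q \<in> R" and h: "\<And>z z'. length z = Suc t \<Longrightarrow>
          (foldl (\<delta> n) p (z @ z') \<in> F n \<longleftrightarrow> foldl (\<delta> n) q (z @ z') \<in> F n)"
        unfolding E_def by blast+
      have "(\<delta> n p x, \<delta> n q x) \<in> E t" for x
      proof -
        have "foldl (\<delta> n) (\<delta> n p x) (z @ z') \<in> F n \<longleftrightarrow> foldl (\<delta> n) (\<delta> n q x) (z @ z') \<in> F n"
          if "length z = t" for z z'
          using h[of "x # z" z'] that by simp
        then show ?thesis unfolding E_def using Rcl pR by blast
      qed
      then show "p \<in> R \<and> q \<in> R \<and> (\<forall>x. (\<delta> n p x, \<delta> n q x) \<in> E t)" using pR by blast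
    next
      assume a: "p \<in> R \<and> q \<in> R \<and> (\<forall>x. (\<delta> n p x, \<delta> n q x) \<in> E t)"
      have "foldl (\<delta> n) p (z @ z') \<in> F n \<longleftrightarrow> foldl (\<delta> n) q (z @ z') \<in> F n"
        if lz: "length z = Suc t" for z z'
      proof -
        obtain x z1 where z: "z = x # z1" using lz by (cases z) auto
        have l1: "length z1 = t" using lz z by simp
        have "(\<delta> n p x, \<delta> n q x) \<in> E t" using a by blast
        then have "foldl (\<delta> n) (\<delta> n p x) (z1 @ z') \<in> F n \<longleftrightarrow> foldl (\<delta> n) (\<delta> n q x) (z1 @ z') \<in> F n"
          unfolding E_def using l1 by blast
        then show ?thesis using z by simp
      qed
      then show "(p,q) \<in> E (Suc t)" unfolding E_def using a by blast
    qed
    have Estab: "E t = E (Suc t) \<Longrightarrow> E (Suc t) = E (Suc (Suc t))" for t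
    proof -
      assume e: "E t = E (Suc t)"
      have "(p,q) \<in> E (Suc t) \<longleftrightarrow> (p,q) \<in> E (Suc (Suc t))" for p q
        using Estep[of p q t] Estep[of p q "Suc t"] e by simp
      then show ?thesis by auto
    qed
    have Efull: "E n = R \<times> R"
    proof
      show "E n \<subseteq> R \<times> R" by (rule Esub)
    next
      show "R \<times> R \<subseteq> E n"
      proof
        fix pq assume "pq \<in> R \<times> R"
        then obtain \<tau> \<tau>' where pq: "pq = (foldl (\<delta> n) (q0 n) \<tau>, foldl (\<delta> n) (q0 n) \<tau>')"
          unfolding R_def by blast
        have "foldl (\<delta> n) (foldl (\<delta> n) (q0 n) \<tau>) (z @ z') \<in> F n \<longleftrightarrow>
              foldl (\<delta> n) (foldl (\<delta> n) (q0 n) \<tau>') (z @ z') \<in> F n"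
          if "length z = n" for z z'
        proof -
          have ln: "n \<le> length (z @ z')" using that by simp
          have "foldl (\<delta> n) (foldl (\<delta> n) (q0 n) \<tau>) (z @ z') \<in> F n \<longleftrightarrow> last_win a n (\<tau> @ (z @ z')) \<in> L"
            using acc[of "\<tau> @ (z @ z')"] by simp
          also have "\<dots> \<longleftrightarrow> last_win a n (z @ z') \<in> L" using lw_append_long[OF ln] by simp
          also have "\<dots> \<longleftrightarrow> last_win a n (\<tau>' @ (z @ z')) \<in> L" using lw_append_long[OF ln] by simp
          also have "\<dots> \<longleftrightarrow> foldl (\<delta> n) (foldl (\<delta> n) (q0 n) \<tau>') (z @ z') \<in> F n"
            using acc[of "\<tau>' @ (z @ z')"] by simp
          finally show ?thesis .
        qed
        then show "pq \<in> E n" unfolding E_def using pq \<open>pq \<in> R \<times> R\<close> by blast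
      qed
    qed
    have finRR: "finite (R \<times> R)" using finR by simp
    obtain t where t: "t \<le> card (R \<times> R)" "\<forall>j \<ge> t. E j = E t"
      using chain_stab[where E=E and S="R \<times> R", OF finRR Esub Emono Estab] by blast
    have "card (R \<times> R) \<le> k" unfolding k_def card_cartesian_product
      using cardR by (simp add: mult_le_mono)
    then have tk: "t \<le> k" using t(1) by simp
    have kn: "k \<le> n" using kl n_def by simp
    have Ek: "E k = R \<times> R" using t(2) tk kn Efull by (metis order_trans)
    define x where "x = take (n - k) u"
    define y where "y = take (n - k) v"
    define s where "s = drop (n - k) u"
    have u: "u = x @ s" unfolding x_def s_def by simp
    have v: "v = y @ s" unfolding y_def s_def using dr len n_def by simp
    have ls: "length s = k" unfolding s_def n_def using kl by simp
    have "(foldl (\<delta> n) (q0 n) x, foldl (\<delta> n) (q0 n) y) \<in> E k" unfolding Ek R_def by blast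
    then have "foldl (\<delta> n) (foldl (\<delta> n) (q0 n) x) (s @ []) \<in> F n \<longleftrightarrow>
               foldl (\<delta> n) (foldl (\<delta> n) (q0 n) y) (s @ []) \<in> F n"
      unfolding E_def using ls by blast
    then have "foldl (\<delta> n) (q0 n) u \<in> F n \<longleftrightarrow> foldl (\<delta> n) (q0 n) v \<in> F n" using u v by simp
    then have "last_win a n u \<in> L \<longleftrightarrow> last_win a n v \<in> L" using acc by blast
    moreover have "last_win a n u = u" "last_win a n v = v" using lw_id[of u n a] lw_id[of v n a] n_def len by simp_all
    ultimately show "u \<in> L \<longleftrightarrow> v \<in> L" by simp
  qed
qed

lemma regI:
  fixes Q :: "'q::countable set" and \<delta> :: "'q \<Rightarrow> 'a \<Rightarrow> 'q"
  assumes fin: "finite Q" and q0: "q0 \<in> Q" and cl: "\<forall>q\<in>Q. \<forall>x. \<delta> q x \<in> Q" and FQ: "F \<subseteq> Q"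
  shows "regular_lang {w. foldl \<delta> q0 w \<in> F}"
proof -
  define \<delta>' where "\<delta>' = (\<lambda>(n::nat) x. to_nat (\<delta> (from_nat n) x))"
  have f: "q \<in> Q \<Longrightarrow> foldl \<delta>' (to_nat q) w = to_nat (foldl \<delta> q w)" for q w
  proof (induction w arbitrary: q)
    case Nil then show ?case by simp
  next
    case (Cons x w)
    have "\<delta> q x \<in> Q" using cl Cons.prems by blast
    then show ?case using Cons.IH[of "\<delta> q x"] by (simp add: \<delta>'_def)
  qed
  have 1: "finite (to_nat ` Q)" using fin by simp
  have 2: "to_nat q0 \<in> to_nat ` Q" using q0 by simp
  have 3: "\<forall>q\<in>to_nat ` Q. \<forall>x. \<delta>' q x \<in> to_nat ` Q"
  proof (intro ballI allI)
    fix q x assume "q \<in> to_nat ` Q"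
    then obtain p where p: "p \<in> Q" "q = to_nat p" by blast
    have "\<delta> p x \<in> Q" using cl p(1) by blast
    then show "\<delta>' q x \<in> to_nat ` Q" using p by (simp add: \<delta>'_def)
  qed
  have 4: "to_nat ` F \<subseteq> to_nat ` Q" using FQ by (rule image_mono)
  have 5: "{w. foldl \<delta> q0 w \<in> F} = {w. foldl \<delta>' (to_nat q0) w \<in> to_nat ` F}"
    using f[OF q0] by (simp add: inj_image_mem_iff)
  show ?thesis unfolding regular_lang_def using 1 2 3 4 5 by blast
qed

lemma reg_len: "regular_lang {w :: 'a list. length w = m}"
proof -
  define \<delta> where "\<delta> = (\<lambda>(i::nat) (x::'a). min (Suc i) (Suc m))"
  have f: "foldl \<delta> 0 w = min (length w) (Suc m)" for w
    by (induction w rule: rev_induct) (auto simp: \<delta>_def)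
  have "{w :: 'a list. length w = m} = {w. foldl \<delta> 0 w \<in> {m}}" using f by auto
  moreover have "regular_lang {w. foldl \<delta> 0 w \<in> {m}}"
    by (rule regI[where Q="{0..Suc m}"]) (auto simp: \<delta>_def)
  ultimately show ?thesis by simp
qed

lemma reg_T:
  fixes a :: 'a and s :: "'a list" and L :: "'a list set"
  assumes "regular_lang L"
  shows "regular_lang {w :: 'a list. k \<le> length w \<and> replicate (length w - k) a @ s \<in> L}"
proof -
  obtain Q q0 \<delta> F where Q: "finite (Q::nat set)" "q0 \<in> Q" "\<forall>q\<in>Q. \<forall>x. \<delta> q x \<in> Q" "F \<subseteq> Q"
    and L: "L = {w. foldl \<delta> q0 w \<in> F}"
    using assms unfolding regular_lang_def by blast
  define \<delta>' where "\<delta>' = (\<lambda>(p::nat \<times> nat) (x::'a). if fst p < k then (Suc (fst p), snd p) else (k, \<delta> (snd p) a))"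
  define F' where "F' = {p. fst p = k \<and> snd p \<in> Q \<and> foldl \<delta> (snd p) s \<in> F}"
  have f: "foldl \<delta>' (0,q0) w = (min (length w) k, foldl \<delta> q0 (replicate (length w - k) a))" for w
  proof (induction w rule: rev_induct)
    case Nil then show ?case by simp
  next
    case (snoc x w)
    show ?case
    proof (cases "length w < k")
      case True
      then have "Suc (length w) - k = 0" "length w - k = 0" by simp_all
      then show ?thesis using snoc True by (simp add: \<delta>'_def)
    next
      case False
      then have e: "Suc (length w) - k = Suc (length w - k)" by simp
      have "replicate (Suc (length w - k)) a = replicate (length w - k) a @ [a]"
        by (simp add: replicate_append_same)
      then show ?thesis using snoc False e by (simp add: \<delta>'_def)
    qed
  qed
  have inQ: "foldl \<delta> q0 v \<in> Q" for v using foldl_in[OF Q(2) Q(3)] .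
  have eq: "{w :: 'a list. k \<le> length w \<and> replicate (length w - k) a @ s \<in> L} = {w. foldl \<delta>' (0,q0) w \<in> F'}"
  proof -
    have "foldl \<delta>' (0,q0) w \<in> F' \<longleftrightarrow> k \<le> length w \<and> replicate (length w - k) a @ s \<in> L" for w
      unfolding f F'_def L using inQ by auto
    then show ?thesis by blast
  qed
  show ?thesis unfolding eq
  proof (rule regI[where Q="{0..k} \<times> Q"])
    show "finite ({0..k} \<times> Q)" using Q(1) by simp
    show "(0, q0) \<in> {0..k} \<times> Q" using Q(2) by simp
    show "\<forall>q\<in>{0..k} \<times> Q. \<forall>x. \<delta>' q x \<in> {0..k} \<times> Q" using Q(3) by (auto simp: \<delta>'_def)
    show "F' \<subseteq> {0..k} \<times> Q" unfolding F'_def by auto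
  qed
qed

lemma bc_Union: "finite S \<Longrightarrow> S \<subseteq> bool_comb B \<Longrightarrow> {} \<in> bool_comb B \<Longrightarrow> \<Union>S \<in> bool_comb B"
proof (induction S rule: finite_induct)
  case empty then show ?case by simp
next
  case (insert x F)
  then have "x \<in> bool_comb B" "\<Union>F \<in> bool_comb B" by simp_all
  then have "x \<union> \<Union>F \<in> bool_comb B" by (rule bool_comb.union)
  then show ?case by simp
qed

lemma bc_empty: "({} :: 'a list set) \<in> bool_comb ({K. suffix_testable K} \<union> {K. regular_lang K \<and> length_lang K})"
proof (rule bool_comb.base)
  show "({} :: 'a list set) \<in> {K. suffix_testable K} \<union> {K. regular_lang K \<and> length_lang K}"
    unfolding suffix_testable_def k_suffix_testable_def by simp
qed

lemma suffix_eq: "length z = length u \<Longrightarrow> (\<exists>x'. x @ z = x' @ u) \<longleftrightarrow> z = u"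
proof
  assume l: "length z = length u" and "\<exists>x'. x @ z = x' @ u"
  then obtain x' where "x @ z = x' @ u" by blast
  then show "z = u" using append_eq_append_conv[of z u x x'] l by simp
qed auto

lemma X_st: "suffix_testable {w. \<exists>x. w = x @ s}"
proof -
  have "k_suffix_testable (length s) {w. \<exists>x. w = x @ s}"
    unfolding k_suffix_testable_def
  proof (intro allI impI)
    fix x y z :: "'a list" assume l: "length z = length s"
    show "x @ z \<in> {w. \<exists>x. w = x @ s} \<longleftrightarrow> y @ z \<in> {w. \<exists>x. w = x @ s}"
      using suffix_eq[OF l, of x] suffix_eq[OF l, of y] by simp
  qed
  then show ?thesis unfolding suffix_testable_def by blast
qed

lemma len_ll: "length_lang {w :: 'a list. length w = m}"
  unfolding length_lang_def by auto

lemma single_bc: "{u :: 'a list} \<in> bool_comb ({K. suffix_testable K} \<union> {K. regular_lang K \<and> length_lang K})"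
proof -
  have e: "{u} = {w. \<exists>x. w = x @ u} \<inter> {w :: 'a list. length w = length u}"
    using suffix_eq[of _ u "[]"] by auto
  have 1: "{w. \<exists>x. w = x @ u} \<in> bool_comb ({K. suffix_testable K} \<union> {K. regular_lang K \<and> length_lang K})"
    using X_st[of u] by (intro bool_comb.base) simp
  have 2: "{w :: 'a list. length w = length u} \<in> bool_comb ({K. suffix_testable K} \<union> {K. regular_lang K \<and> length_lang K})"
  proof (rule bool_comb.base)
    have r: "regular_lang {w :: 'a list. length w = length u}" by (rule reg_len)
    have l: "length_lang {w :: 'a list. length w = length u}" by (rule len_ll)
    show "{w :: 'a list. length w = length u} \<in> {K. suffix_testable K} \<union> {K. regular_lang K \<and> length_lang K}"
      using r l by simp
  qed
  show ?thesis unfolding e using 1 2 by (rule bool_comb.inter)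
qed

lemma decomp:
  fixes a :: "'a::finite" and L :: "'a list set"
  assumes reg: "regular_lang L"
    and suf: "\<forall>u v. length u = length v \<longrightarrow> k \<le> length u \<longrightarrow>
     drop (length u - k) u = drop (length v - k) v \<longrightarrow> (u \<in> L \<longleftrightarrow> v \<in> L)"
  shows "L \<in> bool_comb ({K. suffix_testable K} \<union> {K. regular_lang K \<and> length_lang K})"
proof -
  have sufD: "u \<in> L \<longleftrightarrow> v \<in> L" if "length u = length v" "k \<le> length u"
     "drop (length u - k) u = drop (length v - k) v" for u v
    using suf that by blast
  define T where "T = (\<lambda>s. {w :: 'a list. k \<le> length w \<and> replicate (length w - k) a @ s \<in> L})"
  define X where "X = (\<lambda>s::'a list. {w. \<exists>x. w = x @ s})"
  define A where "A = (\<lambda>u. {u}) ` {u \<in> L. length u < k}"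
  define C where "C = (\<lambda>s. X s \<inter> T s) ` {s. length s = k}"
  have finA: "finite A"
  proof -
    have "{u \<in> L. length u < k} \<subseteq> {u :: 'a list. set u \<subseteq> UNIV \<and> length u \<le> k}" by auto
    moreover have "finite {u :: 'a list. set u \<subseteq> UNIV \<and> length u \<le> k}"
      by (rule finite_lists_length_le) simp
    ultimately show ?thesis unfolding A_def using finite_subset by blast
  qed
  have finC: "finite C"
  proof -
    have "finite {s :: 'a list. set s \<subseteq> UNIV \<and> length s = k}"
      by (rule finite_lists_length_eq) simp
    then show ?thesis unfolding C_def by simp
  qed
  have A_bc: "A \<subseteq> bool_comb ({K. suffix_testable K} \<union> {K. regular_lang K \<and> length_lang K})"
    unfolding A_def using single_bc by blast
  have C_bc: "C \<subseteq> bool_comb ({K. suffix_testable K} \<union> {K. regular_lang K \<and> length_lang K})"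
  proof
    fix Y assume "Y \<in> C"
    then obtain s where Y: "Y = X s \<inter> T s" unfolding C_def by blast
    have 1: "X s \<in> bool_comb ({K. suffix_testable K} \<union> {K. regular_lang K \<and> length_lang K})"
      unfolding X_def using X_st[of s] by (intro bool_comb.base) simp
    have r: "regular_lang (T s)" unfolding T_def by (rule reg_T[OF reg])
    have ll: "length_lang (T s)" unfolding length_lang_def T_def by auto
    have 2: "T s \<in> bool_comb ({K. suffix_testable K} \<union> {K. regular_lang K \<and> length_lang K})"
      using r ll by (intro bool_comb.base) simp
    show "Y \<in> bool_comb ({K. suffix_testable K} \<union> {K. regular_lang K \<and> length_lang K})"
      unfolding Y using 1 2 by (rule bool_comb.inter)
  qed
  have eq: "L = \<Union>A \<union> \<Union>C"
  proof (rule set_eqI)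
    fix w :: "'a list"
    show "w \<in> L \<longleftrightarrow> w \<in> \<Union>A \<union> \<Union>C"
    proof
      assume wL: "w \<in> L"
      show "w \<in> \<Union>A \<union> \<Union>C"
      proof (cases "length w < k")
        case True
        then have "w \<in> \<Union>A" unfolding A_def using wL by blast
        then show ?thesis by blast
      next
        case False
        define s where "s = drop (length w - k) w"
        have ls: "length s = k" unfolding s_def using False by simp
        have wX: "w \<in> X s" unfolding X_def s_def by (metis (mono_tags) append_take_drop_id mem_Collect_eq)
        define r where "r = replicate (length w - k) a @ s"
        have lr: "length r = length w" unfolding r_def using ls False by simp
        have dr: "drop (length r - k) r = s" unfolding r_def using ls by simp
        have "w \<in> L \<longleftrightarrow> r \<in> L" using sufD[of w r] lr False dr s_def by simp
        then have "w \<in> T s" unfolding T_def using wL False r_def by simp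
        then have "w \<in> \<Union>C" unfolding C_def using wX ls by blast
        then show ?thesis by blast
      qed
    next
      assume "w \<in> \<Union>A \<union> \<Union>C"
      then show "w \<in> L"
      proof
        assume "w \<in> \<Union>A" then show "w \<in> L" unfolding A_def by blast
      next
        assume "w \<in> \<Union>C"
        then obtain s where ls: "length s = k" and wX: "w \<in> X s" and wT: "w \<in> T s"
          unfolding C_def by blast
        obtain x where wx: "w = x @ s" using wX unfolding X_def by blast
        define r where "r = replicate (length w - k) a @ s"
        have kw: "k \<le> length w" and rL: "r \<in> L" using wT unfolding T_def r_def by simp_all
        have lr: "length r = length w" unfolding r_def using ls kw by simp
        have dr: "drop (length r - k) r = s" unfolding r_def using ls by simp
        have dw: "drop (length w - k) w = s" unfolding wx using ls by simp
        have "r \<in> L \<longleftrightarrow> w \<in> L" using sufD[of r w] lr kw dr dw by simp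
        then show "w \<in> L" using rL by simp
      qed
    qed
  qed
  have "\<Union>A \<in> bool_comb ({K. suffix_testable K} \<union> {K. regular_lang K \<and> length_lang K})"
    by (rule bc_Union[OF finA A_bc bc_empty])
  moreover have "\<Union>C \<in> bool_comb ({K. suffix_testable K} \<union> {K. regular_lang K \<and> length_lang K})"
    by (rule bc_Union[OF finC C_bc bc_empty])
  ultimately show ?thesis unfolding eq by (rule bool_comb.union)
qed

theorem theorem6p1:
  fixes a :: "'a::finite" and L :: "'a list set"
  assumes "regular_lang L"
  shows "F_O1 a L \<longleftrightarrow>
    L \<in> bool_comb ({K. suffix_testable K} \<union> {K. regular_lang K \<and> length_lang K})"
proof
  assume "F_O1 a L"
  then obtain k where "\<forall>u v. length u = length v \<longrightarrow> k \<le> length u \<longrightarrow>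
     drop (length u - k) u = drop (length v - k) v \<longrightarrow> (u \<in> L \<longleftrightarrow> v \<in> L)"
    using FO1_suf[of a L] \<open>F_O1 a L\<close> by blast
  then show "L \<in> bool_comb ({K. suffix_testable K} \<union> {K. regular_lang K \<and> length_lang K})"
    by (rule decomp[OF assms])
next
  assume "L \<in> bool_comb ({K. suffix_testable K} \<union> {K. regular_lang K \<and> length_lang K})"
  then obtain K where "PK a L K" using PK_comb[of L a] by blast
  then show "F_O1 a L" by (rule PK_F)
qed

end
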